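(* Let $k>l\ge0$ be integers with $k+l\ge3$, let $\theta\in\mathbb{R}$, $\xi=e^{i\theta}$, $f:\mathbb{N}\to[0,\infty)$, and $A=\xi(a^\dagger)^ka^l+\xi^*(a^\dagger)^la^k+f(a^\dagger a)$ with domain $\mathcal{D}_0$. Assume $f(n)/\beta^{kl}_n$ admits an asymptotic expansion in powers of $n^{-1/2}$, $$\frac{f(n)}{\beta^{kl}_n}\sim\kappa+\frac{L_1}{n^{1/2}}+\frac{L_2}{n}+\cdots$$ with $\kappa<2$. Then $A$ is unbounded from below, and so is every self-adjoint extension of $A$.
   Context: $\mathbb{N}=\{0,1,2,\dots\}$. $\mathcal{H}$ is a separable complex Hilbert space with orthonormal basis $(\phi_n)_{n\in\mathbb{N}}$; $\mathcal{D}_0$ is the set of finite linear combinations of the $\phi_n$. The operators $a,a^\dagger$ have domain $\mathcal{D}_0$ and act by $a\phi_n=\sqrt{n}\,\phi_{n-1}$ ($a\phi_0=0$), $a^\dagger\phi_n=\sqrt{n+1}\,\phi_{n+1}$, extended linearly. $f(a^\dagger a)$ has domain $\mathcal{D}_0$ and $f(a^\dagger a)\phi_n=f(n)\phi_n$. For integers $x$ and $s\ge0$, $(x,s)=x(x+1)\cdots(x+s-1)$ ($=1$ if $s=0$), with $(x,s)=0$ whenever $x$ is a negative integer; $\beta^{kl}_n=\sqrt{(n-l+1,l)(n-l+1,k)}$. A function $g:\mathbb{N}\to\mathbb{C}$ admits the asymptotic expansion $g(n)\sim\sum_{s\ge0}\lambda_sn^{-s/2}$ if for every $S$ there are $C,N$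 with $|g(n)-\sum_{s=0}^S\lambda_sn^{-s/2}|\le Cn^{-(S+1)/2}$ for $n\ge N$. *)

theory Defs
  imports Complex_Main
begin

text \<open>The Hilbert space H is realised as l^2(N): coordinates w.r.t. the orthonormal
basis phi_n, i.e. phi_n is the indicator sequence of n.\<close>

definition l2 :: "(nat \<Rightarrow> complex) set" where
  "l2 = {x. summable (\<lambda>n. (cmod (x n))\<^sup>2)}"

definition ip :: "(nat \<Rightarrow> complex) \<Rightarrow> (nat \<Rightarrow> complex) \<Rightarrow> complex" where
  "ip x y = (\<Sum>n. cnj (x n) * y n)"

definition nrm2 :: "(nat \<Rightarrow> complex) \<Rightarrow> real" where
  "nrm2 x = (\<Sum>n. (cmod (x n))\<^sup>2)"

definition D0 :: "(nat \<Rightarrow> complex) set" where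
  "D0 = {x. finite {n. x n \<noteq> 0}}"

text \<open>Annihilation a phi_n = sqrt n phi_(n-1), creation a^dagger phi_n = sqrt(n+1) phi_(n+1),
 written in coordinates.\<close>
definition ann :: "(nat \<Rightarrow> complex) \<Rightarrow> (nat \<Rightarrow> complex)" where
  "ann x = (\<lambda>m. complex_of_real (sqrt (real (m + 1))) * x (m + 1))"

definition cre :: "(nat \<Rightarrow> complex) \<Rightarrow> (nat \<Rightarrow> complex)" where
  "cre x = (\<lambda>m. if m = 0 then 0 else complex_of_real (sqrt (real m)) * x (m - 1))"

definition opA :: "nat \<Rightarrow> nat \<Rightarrow> complex \<Rightarrow> (nat \<Rightarrow> real) \<Rightarrow>
    (nat \<Rightarrow> complex) \<Rightarrow> (nat \<Rightarrow> complex)" where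
  "opA k l \<xi> f x = (\<lambda>m. \<xi> * (cre ^^ k) ((ann ^^ l) x) m
                      + cnj \<xi> * (cre ^^ l) ((ann ^^ k) x) m
                      + complex_of_real (f m) * x m)"

definition rfac :: "int \<Rightarrow> nat \<Rightarrow> real" where
  "rfac x s = (if x < 0 then 0 else pochhammer (real_of_int x) s)"

definition beta :: "nat \<Rightarrow> nat \<Rightarrow> nat \<Rightarrow> real" where
  "beta k l n = sqrt (rfac (int n - int l + 1) l * rfac (int n - int l + 1) k)"

definition asymp_expansion :: "(nat \<Rightarrow> real) \<Rightarrow> (nat \<Rightarrow> real) \<Rightarrow> bool" where
  "asymp_expansion g lam \<longleftrightarrow>
     (\<forall>S::nat. \<exists>(C::real) (N::nat). \<forall>n\<ge>N.
        \<bar>g n - (\<Sum>s\<le>S. lam s * real n powr (- real s / 2))\<bar>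
          \<le> C * real n powr (- (real S + 1) / 2))"

text \<open>An operator (D,T) is unbounded from below: no M with <x,Tx> >= M ||x||^2 on D.
 (For the symmetric operators considered, <x,Tx> is real; we use its real part.)\<close>
definition unbounded_below :: "(nat \<Rightarrow> complex) set \<Rightarrow>
    ((nat \<Rightarrow> complex) \<Rightarrow> (nat \<Rightarrow> complex)) \<Rightarrow> bool" where
  "unbounded_below D T \<longleftrightarrow> (\<forall>M::real. \<exists>x\<in>D. Re (ip x (T x)) < M * nrm2 x)"

text \<open>(D,B) is a self-adjoint operator in l2 extending (D0,A):
 B maps D into l2, D contains D0, B agrees with A on D0, and the adjoint of (D,B)
 has domain exactly D and acts as B there.\<close>
definition self_adjoint_extension ::
  "(nat \<Rightarrow> complex) set \<Rightarrow> ((nat \<Rightarrow> complex) \<Rightarrow> (nat \<Rightarrow> complex)) \<Rightarrow>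
   (nat \<Rightarrow> complex) set \<Rightarrow> ((nat \<Rightarrow> complex) \<Rightarrow> (nat \<Rightarrow> complex)) \<Rightarrow> bool" where
  "self_adjoint_extension D B D' A \<longleftrightarrow>
     D \<subseteq> l2 \<and> B ` D \<subseteq> l2 \<and> D' \<subseteq> D \<and> (\<forall>x\<in>D'. B x = A x) \<and>
     {y\<in>l2. \<exists>z\<in>l2. \<forall>x\<in>D. ip (B x) y = ip x z} = D \<and>
     (\<forall>x\<in>D. \<forall>y\<in>D. ip (B x) y = ip x (B y))"

end

theory Submission imports Defs begin

lemma ann_pow: "(ann ^^ l) x m = complex_of_real (sqrt (pochhammer (real m + 1) l)) * x (m + l)"
proof (induction l arbitrary: m)
  case 0 then show ?case by simp
next
  case (Suc l)
  have "(ann ^^ Suc l) x m = complex_of_real (sqrt (real (m+1))) * ((ann ^^ l) x (m+1))"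
    by (simp add: ann_def)
  also have "\<dots> = complex_of_real (sqrt (real m + 1) * sqrt (pochhammer (real m + 1 + 1) l)) * x (m + Suc l)"
    using Suc by (simp add: add.commute)
  also have "sqrt (real m + 1) * sqrt (pochhammer (real m + 1 + 1) l) = sqrt (pochhammer (real m + 1) (Suc l))"
    by (simp add: pochhammer_rec real_sqrt_mult)
  finally show ?case .
qed

lemma cre_pow: "(cre ^^ k) y m = (if m < k then 0 else complex_of_real (sqrt (pochhammer (real (m - k) + 1) k)) * y (m - k))"
proof (induction k arbitrary: m)
  case 0 then show ?case by simp
next
  case (Suc k)
  have e: "(cre ^^ Suc k) y m = (if m = 0 then 0 else complex_of_real (sqrt (real m)) * (cre ^^ k) y (m - 1))"
    by (simp add: cre_def)
  show ?case
  proof (cases "m < Suc k")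
    case True then show ?thesis using e Suc by auto
  next
    case False
    then have m: "m - 1 - k = m - Suc k" "\<not> m - 1 < k" "m \<noteq> 0" by auto
    have p: "pochhammer (real (m - Suc k) + 1) (Suc k) = real m * pochhammer (real (m - Suc k) + 1) k"
      using False by (simp add: pochhammer_rec' of_nat_diff)
    show ?thesis using False e Suc m p by (simp add: real_sqrt_mult)
  qed
qed

lemma poch_ge1: "(1::real) \<le> x \<Longrightarrow> 1 \<le> pochhammer x s"
proof (induction s)
  case (Suc s)
  have "1 * 1 \<le> (x + real s) * pochhammer x s" using Suc by (intro mult_mono) auto
  then show ?case by (simp add: pochhammer_rec')
qed simp

lemma poch_gex: "(1::real) \<le> x \<Longrightarrow> 1 \<le> s \<Longrightarrow> x \<le> pochhammer x s"
proof -
  assume x: "1 \<le> x" and s: "1 \<le> s"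
  then obtain t where t: "s = Suc t" by (cases s) auto
  have "pochhammer x s = (x + real t) * pochhammer x t" by (simp add: t pochhammer_rec')
  also have "\<dots> \<ge> x * 1" using poch_ge1[OF x, of t] x by (intro mult_mono) auto
  finally show ?thesis by simp
qed

lemma poch_mono: "(0::real) < x \<Longrightarrow> x \<le> y \<Longrightarrow> pochhammer x s \<le> pochhammer y s"
proof (induction s)
  case (Suc s) then show ?case
    by (simp add: pochhammer_rec') (intro mult_mono, auto simp: pochhammer_nonneg)
qed simp

lemma poch_ratio: "(0::real) < x \<Longrightarrow> 0 \<le> m \<Longrightarrow> pochhammer (x + m) s \<le> (1 + m / x) ^ s * pochhammer x s"
proof (induction s)
  case (Suc s)
  have "x + m + real s \<le> (1 + m / x) * (x + real s)"
    using Suc.prems by (simp add: field_simps)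
  have "pochhammer (x + m) (Suc s) = (x + m + real s) * pochhammer (x + m) s"
    by (simp add: pochhammer_rec')
  also have "\<dots> \<le> ((1 + m / x) * (x + real s)) * ((1 + m / x) ^ s * pochhammer x s)"
    using Suc \<open>x + m + real s \<le> (1 + m / x) * (x + real s)\<close> by (intro mult_mono) (auto simp: pochhammer_nonneg)
  also have "\<dots> = (1 + m / x) ^ Suc s * ((x + real s) * pochhammer x s)"
    by (simp only: power_Suc mult_ac)
  also have "\<dots> = (1 + m / x) ^ Suc s * pochhammer x (Suc s)"
    by (simp only: pochhammer_rec')
  finally show ?case .
qed simp

definition vec :: "complex \<Rightarrow> nat \<Rightarrow> nat \<Rightarrow> nat \<Rightarrow> nat \<Rightarrow> complex" where
  "vec w d n W m = (if n \<le> m \<and> m < n + W * d \<and> d dvd (m - n) then w ^ ((m - n) div d) else 0)"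

lemma vec_at: "0 < d \<Longrightarrow> vec w d n W (n + j * d) = (if j < W then w ^ j else 0)"
  by (auto simp: vec_def)

lemma vec_lt: "m < n \<Longrightarrow> vec w d n W m = 0"
  by (auto simp: vec_def)

lemma vec_out: assumes "0 < d" "m \<notin> (\<lambda>j. n + j * d) ` {..<W}" shows "vec w d n W m = 0"
proof (rule ccontr)
  assume "vec w d n W m \<noteq> 0"
  then have h: "n \<le> m" "m < n + W * d" "d dvd (m - n)" by (auto simp: vec_def split: if_splits)
  then obtain q where q: "m - n = d * q" by (auto simp: dvd_def)
  then have m: "m = n + q * d" using h by (simp add: algebra_simps)
  then have "q * d < W * d" using h by linarith
  then have "q < W" by (simp add: mult_less_cancel2)
  with m show False using assms(2) by auto
qed

definition bb :: "nat \<Rightarrow> nat \<Rightarrow> nat \<Rightarrow> real" where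
  "bb k l n = sqrt (pochhammer (real (n - l) + 1) l * pochhammer (real (n - l) + 1) k)"

lemma T1: assumes "k = l + d" shows "(cre ^^ k) ((ann ^^ l) x) m = (if m < k then 0 else complex_of_real (bb k l (m - d)) * x (m - d))"
proof (cases "m < k")
  case False
  then have e: "m - d - l = m - k" "m - k + l = m - d" using assms by auto
  show ?thesis using False unfolding cre_pow ann_pow bb_def e
    by (simp only: if_False real_sqrt_mult of_real_mult mult_ac)
qed (simp add: cre_pow)

lemma T2: assumes "k = l + d" shows "(cre ^^ l) ((ann ^^ k) x) m = (if m < l then 0 else complex_of_real (bb k l m) * x (m + d))"
proof (cases "m < l")
  case False
  then have e: "m - l + k = m + d" using assms by auto
  show ?thesis using False unfolding cre_pow ann_pow bb_def e
    by (simp only: if_False real_sqrt_mult of_real_mult mult_ac)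
qed (simp add: cre_pow)

lemma ip_finite: "finite N \<Longrightarrow> (\<And>m. m \<notin> N \<Longrightarrow> x m = 0) \<Longrightarrow> ip x y = (\<Sum>m\<in>N. cnj (x m) * y m)"
  unfolding ip_def by (rule suminf_finite) auto

lemma nrm2_finite: "finite N \<Longrightarrow> (\<And>m. m \<notin> N \<Longrightarrow> x m = 0) \<Longrightarrow> nrm2 x = (\<Sum>m\<in>N. (cmod (x m))\<^sup>2)"
  unfolding nrm2_def by (rule suminf_finite) auto

lemma cnj_pow_unit: "cmod w = 1 \<Longrightarrow> cnj (w ^ j) * w ^ j = 1"
proof -
  assume a: "cmod w = 1"
  have "cmod (w ^ j) = 1" using a by (simp add: norm_power)
  moreover have "w ^ j * cnj (w ^ j) = complex_of_real ((cmod (w ^ j))\<^sup>2)" by (rule complex_norm_square[symmetric])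
  ultimately show ?thesis by (simp add: mult.commute)
qed


lemma sum_shift_id: "(\<Sum>j<Suc V. (if j = 0 then 0 else B (j - 1))) = (\<Sum>j<V. (B j :: real))"
  by (simp only: sum.lessThan_Suc_shift) simp

lemma sum_last_id: "(\<Sum>j<Suc V. (if j < V then B j else 0)) = (\<Sum>j<V. (B j :: real))"
  by simp

lemma quad:
  assumes kd: "k = l + d" and d: "0 < d" and n: "l \<le> n" and w: "cmod w = 1"
    and xw: "\<xi> * cnj w = -1" and xw2: "cnj \<xi> * w = -1"
  shows "ip (vec w d n (Suc V)) (opA k l \<xi> f (vec w d n (Suc V)))
     = complex_of_real ((\<Sum>j<Suc V. f (n + j * d)) - 2 * (\<Sum>j<V. bb k l (n + j * d)))"
proof -
  define x where "x = vec w d n (Suc V)"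
  define N where "N = (\<lambda>j. n + j * d) ` {..<Suc V}"
  have inj: "inj_on (\<lambda>j. n + j * d) {..<Suc V}" using d by (auto simp: inj_on_def)
  have "ip x (opA k l \<xi> f x) = (\<Sum>m\<in>N. cnj (x m) * opA k l \<xi> f x m)"
    by (rule ip_finite) (auto simp: N_def x_def vec_out[OF d])
  also have "\<dots> = (\<Sum>j<Suc V. cnj (x (n + j * d)) * opA k l \<xi> f x (n + j * d))"
    unfolding N_def by (rule sum.reindex[OF inj, unfolded comp_def])
  also have "\<dots> = (\<Sum>j<Suc V. complex_of_real (f (n + j * d)
        - (if j = 0 then 0 else bb k l (n + (j - 1) * d)) - (if j < V then bb k l (n + j * d) else 0)))"
  proof (rule sum.cong[OF refl])
    fix j assume j: "j \<in> {..<Suc V}"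
    let ?m = "n + j * d"
    have xm: "x ?m = w ^ j" using j d by (simp add: x_def vec_at)
    have A1: "cnj (w ^ j) * (\<xi> * (cre ^^ k) ((ann ^^ l) x) ?m)
        = (if j = 0 then 0 else - complex_of_real (bb k l (n + (j - 1) * d)))"
    proof (cases j)
      case 0
      have "x (n - d) = 0" if "\<not> n < k" unfolding x_def using that d kd by (intro vec_lt) auto
      then show ?thesis using 0 by (simp add: T1[OF kd])
    next
      case (Suc i)
      have e: "\<not> ?m < k" "?m - d = n + i * d" using Suc kd n by auto
      have xi: "x (n + i * d) = w ^ i" using Suc j d by (simp add: x_def vec_at)
      have "cnj (w ^ j) * (\<xi> * (cre ^^ k) ((ann ^^ l) x) ?m)
          = (\<xi> * cnj w) * (cnj (w ^ i) * w ^ i) * complex_of_real (bb k l (n + i * d))"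
        using e xi Suc by (simp add: T1[OF kd] mult_ac)
      then show ?thesis using Suc xw cnj_pow_unit[OF w] by simp
    qed
    have A2: "cnj (w ^ j) * (cnj \<xi> * (cre ^^ l) ((ann ^^ k) x) ?m)
        = (if j < V then - complex_of_real (bb k l ?m) else 0)"
    proof -
      have e: "\<not> ?m < l" "?m + d = n + Suc j * d" using n by auto
      have xs: "x (n + Suc j * d) = (if j < V then w ^ Suc j else 0)" unfolding x_def using vec_at[OF d, of w n "Suc V" "Suc j"] by simp
      have xs2: "x (?m + d) = (if j < V then w ^ Suc j else 0)" using xs by (simp only: e(2))
      have t2: "(cre ^^ l) ((ann ^^ k) x) ?m = complex_of_real (bb k l ?m) * x (?m + d)"
        using e(1) by (simp only: T2[OF kd] if_False)
      show ?thesis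
      proof (cases "j < V")
        case True
        have "cnj (w ^ j) * (cnj \<xi> * (cre ^^ l) ((ann ^^ k) x) ?m)
            = (cnj \<xi> * w) * (cnj (w ^ j) * w ^ j) * complex_of_real (bb k l ?m)"
          unfolding t2 xs2 using True by (simp add: mult_ac)
        then show ?thesis using True xw2 cnj_pow_unit[OF w] by simp
      next
        case False then show ?thesis unfolding t2 xs2 by simp
      qed
    qed
    have A3: "cnj (w ^ j) * (complex_of_real (f ?m) * x ?m) = complex_of_real (f ?m)"
      using cnj_pow_unit[OF w, of j] unfolding xm by (simp add: mult_ac)
    have "cnj (x ?m) * opA k l \<xi> f x ?m
        = cnj (w ^ j) * (\<xi> * (cre ^^ k) ((ann ^^ l) x) ?m)
          + cnj (w ^ j) * (cnj \<xi> * (cre ^^ l) ((ann ^^ k) x) ?m)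
          + cnj (w ^ j) * (complex_of_real (f ?m) * x ?m)"
      unfolding opA_def by (simp only: xm distrib_left)
    also have "\<dots> = (if j = 0 then 0 else - complex_of_real (bb k l (n + (j - 1) * d)))
        + (if j < V then - complex_of_real (bb k l ?m) else 0) + complex_of_real (f ?m)"
      by (simp only: A1 A2 A3)
    also have "\<dots> = complex_of_real (f ?m
        - (if j = 0 then 0 else bb k l (n + (j - 1) * d)) - (if j < V then bb k l ?m else 0))"
      by simp
    finally show "cnj (x ?m) * opA k l \<xi> f x ?m = complex_of_real (f ?m
        - (if j = 0 then 0 else bb k l (n + (j - 1) * d)) - (if j < V then bb k l ?m else 0))" .
  qed
  also have "\<dots> = complex_of_real (\<Sum>j<Suc V. f (n + j * d)
        - (if j = 0 then 0 else bb k l (n + (j - 1) * d)) - (if j < V then bb k l (n + j * d) else 0))"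
    by (simp only: of_real_sum)
  also have "(\<Sum>j<Suc V. f (n + j * d)
        - (if j = 0 then 0 else bb k l (n + (j - 1) * d)) - (if j < V then bb k l (n + j * d) else 0))
      = (\<Sum>j<Suc V. f (n + j * d)) - 2 * (\<Sum>j<V. bb k l (n + j * d))"
    using sum_shift_id[where V=V and B="\<lambda>i. bb k l (n + i * d)"] sum_last_id[where V=V and B="\<lambda>i. bb k l (n + i * d)"]
    by (simp only: sum_subtractf)
  finally show ?thesis unfolding x_def .
qed

lemma nrm_vec: assumes d: "0 < d" and w: "cmod w = 1" shows "nrm2 (vec w d n W) = real W"
proof -
  have inj: "inj_on (\<lambda>j. n + j * d) {..<W}" using d by (auto simp: inj_on_def)
  have "nrm2 (vec w d n W) = (\<Sum>m\<in>(\<lambda>j. n + j * d) ` {..<W}. (cmod (vec w d n W m))\<^sup>2)"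
    by (rule nrm2_finite) (auto simp: vec_out[OF d])
  also have "\<dots> = (\<Sum>j<W. (cmod (vec w d n W (n + j * d)))\<^sup>2)"
    by (rule sum.reindex[OF inj, unfolded comp_def])
  also have "\<dots> = (\<Sum>j<W. 1)"
    by (rule sum.cong) (auto simp: vec_at[OF d] norm_power w)
  finally show ?thesis by simp
qed

lemma vec_D0: assumes d: "0 < d" shows "vec w d n W \<in> D0"
proof -
  have "{m. vec w d n W m \<noteq> 0} \<subseteq> (\<lambda>j. n + j * d) ` {..<W}" using vec_out[OF d] by blast
  then show ?thesis unfolding D0_def by (auto intro: finite_subset)
qed


lemma bb_mono: assumes "l \<le> n" "n \<le> n'" shows "bb k l n \<le> bb k l n'"
proof -
  have x: "0 < real (n - l) + 1" "real (n - l) + 1 \<le> real (n' - l) + 1" using assms by auto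
  show ?thesis unfolding bb_def
    by (intro real_sqrt_le_mono mult_mono poch_mono x) (auto simp: pochhammer_nonneg)
qed

lemma bb_ge: assumes "l \<le> n" "1 \<le> k" shows "sqrt (real (n - l) + 1) \<le> bb k l n"
proof -
  have x: "1 \<le> real (n - l) + 1" by simp
  have "1 * (real (n - l) + 1) \<le> pochhammer (real (n - l) + 1) l * pochhammer (real (n - l) + 1) k"
    by (intro mult_mono poch_ge1 poch_gex x assms(2)) (auto simp: pochhammer_nonneg)
  then show ?thesis unfolding bb_def by (intro real_sqrt_le_mono) simp
qed

lemma bb_ratio: assumes "l \<le> n" "(1 + real m / (real (n - l) + 1)) ^ (k + l) \<le> 4"
  shows "bb k l (n + m) \<le> 2 * bb k l n"
proof -
  define x where "x = real (n - l) + 1"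
  define r where "r = 1 + real m / x"
  have x0: "0 < x" by (simp add: x_def)
  have r1: "1 \<le> r" using x0 by (simp add: r_def)
  have e: "real (n + m - l) + 1 = x + real m" using assms(1) by (simp add: x_def of_nat_diff)
  have "pochhammer (x + real m) l * pochhammer (x + real m) k
      \<le> (r ^ l * pochhammer x l) * (r ^ k * pochhammer x k)"
    unfolding r_def using x0 by (intro mult_mono poch_ratio x0) (auto intro!: pochhammer_nonneg mult_nonneg_nonneg zero_le_power)
  also have "\<dots> = r ^ (k + l) * (pochhammer x l * pochhammer x k)"
    by (simp add: power_add mult_ac)
  also have "\<dots> \<le> 4 * (pochhammer x l * pochhammer x k)"
    using assms(2) by (intro mult_right_mono) (auto simp: r_def x_def pochhammer_nonneg)
  finally have "bb k l (n + m) \<le> sqrt (4 * (pochhammer x l * pochhammer x k))"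
    unfolding bb_def e by (rule real_sqrt_le_mono)
  also have "\<dots> = 2 * bb k l n" by (simp add: bb_def x_def real_sqrt_mult)
  finally show ?thesis .
qed

lemma beta_eq: "l \<le> n \<Longrightarrow> beta k l n = bb k l n"
  unfolding beta_def bb_def rfac_def by (simp add: of_nat_diff)

lemma filterlim_shift: "filterlim (\<lambda>n. real (n - l) + 1) at_top sequentially"
  unfolding filterlim_at_top eventually_sequentially
proof
  fix Z :: real
  show "\<exists>N. \<forall>n\<ge>N. Z \<le> real (n - l) + 1"
  proof (intro exI allI impI)
    fix n assume "nat \<lceil>Z\<rceil> + l \<le> n"
    then have "real (nat \<lceil>Z\<rceil>) \<le> real (n - l)" by simp
    then show "Z \<le> real (n - l) + 1" using real_nat_ceiling_ge[of Z] by linarith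
  qed
qed


theorem proposition4p18:
  fixes k l :: nat and \<theta> \<kappa> :: real and f :: "nat \<Rightarrow> real" and L :: "nat \<Rightarrow> real"
  assumes "l < k" and "k + l \<ge> 3"
    and "\<forall>n. f n \<ge> 0"
    and "asymp_expansion (\<lambda>n. f n / beta k l n) L"
    and "L 0 = \<kappa>" and "\<kappa> < 2"
  shows "unbounded_below D0 (opA k l (exp (\<i> * complex_of_real \<theta>)) f)
    \<and> (\<forall>D B. self_adjoint_extension D B D0 (opA k l (exp (\<i> * complex_of_real \<theta>)) f)
              \<longrightarrow> unbounded_below D B)"
proof -
  define \<xi> where "\<xi> = exp (\<i> * complex_of_real \<theta>)"
  have first: "unbounded_below D0 (opA k l \<xi> f)"
    unfolding unbounded_below_def
  proof
    fix M :: real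
    obtain d where kd: "k = l + d" and d: "0 < d" using assms(1) by (metis less_imp_add_positive)
    have k1: "1 \<le> k" using assms(1) by simp
    define w where "w = - \<xi>"
    have xi1: "cmod \<xi> = 1" by (simp add: \<xi>_def)
    have w1: "cmod w = 1" using xi1 by (simp add: w_def)
    have xx: "\<xi> * cnj \<xi> = 1" using complex_norm_square[of \<xi>] xi1 by simp
    have xw: "\<xi> * cnj w = -1" using xx by (simp add: w_def)
    have xw2: "cnj \<xi> * w = -1" using xx by (simp add: w_def mult.commute)
    define \<kappa>0 where "\<kappa>0 = max \<kappa> 0"
    define \<epsilon> where "\<epsilon> = (2 - \<kappa>0) / 4"
    define a where "a = \<kappa>0 + \<epsilon>"
    have eps: "0 < \<epsilon>" using assms(6) by (simp add: \<epsilon>_def \<kappa>0_def)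
    have a0: "0 \<le> a" "a < 2" using assms(6) by (auto simp: a_def \<epsilon>_def \<kappa>0_def max_def field_simps)
    obtain C N0 where CN: "\<forall>n\<ge>N0. \<bar>f n / beta k l n - (\<Sum>s\<le>0. L s * real n powr (- real s / 2))\<bar>
          \<le> C * real n powr (- (real 0 + 1) / 2)"
      using assms(4) unfolding asymp_expansion_def by blast
    have CN': "\<bar>f n / beta k l n - \<kappa>\<bar> \<le> C * real n powr (- 1 / 2)" if "n \<ge> max N0 1" for n
      using CN[rule_format, of n] that assms(5) by simp
    have "((\<lambda>n. C * real n powr (- 1 / 2)) \<longlongrightarrow> C * 0) sequentially"
      by (intro tendsto_mult tendsto_const tendsto_neg_powr filterlim_real_sequentially) simp
    then have "eventually (\<lambda>n. C * real n powr (- 1 / 2) < \<epsilon>) sequentially"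
      using eps by (intro order_tendstoD(2)) auto
    then obtain N1 where N1: "\<And>n. n \<ge> N1 \<Longrightarrow> C * real n powr (- 1 / 2) < \<epsilon>"
      unfolding eventually_sequentially by blast
    define Nf where "Nf = max (max N0 1) (max N1 l)"
    have fb: "f n \<le> a * bb k l n" if "n \<ge> Nf" for n
    proof -
      have nl: "l \<le> n" using that by (simp add: Nf_def)
      have "1 \<le> sqrt (real (n - l) + 1)" by simp
      then have bpos: "0 < bb k l n"
        using bb_ge[OF nl k1] by linarith
      have "f n / bb k l n - \<kappa> < \<epsilon>"
        using CN'[of n] N1[of n] that beta_eq[OF nl] by (auto simp: Nf_def)
      then have "f n / bb k l n \<le> a" by (simp add: a_def \<kappa>0_def)
      then show ?thesis using bpos by (simp add: pos_divide_le_eq mult.commute)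
    qed
    obtain V :: nat where V: "(2 * a + 1) / (2 - a) < real V" using reals_Archimedean2 by blast
    have V': "2 * a + 1 \<le> (2 - a) * real V"
      using V a0 by (simp add: pos_divide_less_eq mult.commute)
    define m where "m = V * d"
    have "((\<lambda>n. (1 + real m / (real (n - l) + 1)) ^ (k + l)) \<longlongrightarrow> (1 + 0) ^ (k + l)) sequentially"
      by (intro tendsto_power tendsto_add tendsto_const tendsto_divide_0[OF tendsto_const]
            filterlim_at_top_imp_at_infinity filterlim_shift)
    then have E2: "eventually (\<lambda>n. (1 + real m / (real (n - l) + 1)) ^ (k + l) < 4) sequentially"
      by (intro order_tendstoD(2)) auto
    define c where "c = \<bar>M\<bar> * (real V + 1) + 1"
    have E4: "eventually (\<lambda>n. c\<^sup>2 + 1 \<le> real (n - l) + 1) sequentially"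
      using filterlim_shift unfolding filterlim_at_top by blast
    have E3: "eventually (\<lambda>n. Nf \<le> n) sequentially" by (rule eventually_ge_at_top)
    obtain n where n2: "(1 + real m / (real (n - l) + 1)) ^ (k + l) < 4"
      and n4: "c\<^sup>2 + 1 \<le> real (n - l) + 1" and n3: "Nf \<le> n"
      using eventually_happens'[OF _ eventually_conj[OF E2 eventually_conj[OF E4 E3]]] by auto
    have nl: "l \<le> n" using n3 by (simp add: Nf_def)
    define x where "x = vec w d n (Suc V)"
    have xD: "x \<in> D0" unfolding x_def by (rule vec_D0[OF d])
    have Q: "Re (ip x (opA k l \<xi> f x)) = (\<Sum>j<Suc V. f (n + j * d)) - 2 * (\<Sum>j<V. bb k l (n + j * d))"
      unfolding x_def quad[OF kd d nl w1 xw xw2] by simp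
    have nx: "nrm2 x = real V + 1" unfolding x_def nrm_vec[OF d w1] by simp
    have s1: "(\<Sum>j<Suc V. f (n + j * d)) \<le> (\<Sum>j<Suc V. a * bb k l (n + j * d))"
      by (intro sum_mono fb) (use n3 in auto)
    have s2: "real V * bb k l n \<le> (\<Sum>j<V. bb k l (n + j * d))"
    proof -
      have "(\<Sum>j<V. bb k l n) \<le> (\<Sum>j<V. bb k l (n + j * d))"
        by (intro sum_mono bb_mono nl) auto
      then show ?thesis by simp
    qed
    have s3: "bb k l (n + V * d) \<le> 2 * bb k l n"
      using bb_ratio[OF nl, of m] n2 by (simp add: m_def)
    have bbc: "c < bb k l n"
    proof -
      have c0: "0 \<le> c" by (simp add: c_def)
      have "c\<^sup>2 < real (n - l) + 1" using n4 by linarith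
      then have "c < sqrt (real (n - l) + 1)" by (rule real_less_rsqrt)
      then show ?thesis using bb_ge[OF nl k1] by linarith
    qed
    have "0 \<le> c" unfolding c_def by (intro add_nonneg_nonneg mult_nonneg_nonneg) auto
    then have bb0: "0 \<le> bb k l n" using bbc by linarith
    have "Re (ip x (opA k l \<xi> f x)) \<le> a * (\<Sum>j<V. bb k l (n + j * d)) + a * bb k l (n + V * d)
           - 2 * (\<Sum>j<V. bb k l (n + j * d))"
      using s1 unfolding Q by (simp add: sum_distrib_left[symmetric] distrib_left)
    also have "\<dots> = a * bb k l (n + V * d) - (2 - a) * (\<Sum>j<V. bb k l (n + j * d))"
      by (simp add: algebra_simps)
    also have "\<dots> \<le> a * (2 * bb k l n) - (2 - a) * (real V * bb k l n)"
      using s2 s3 a0 by (intro diff_mono mult_left_mono) auto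
    also have "\<dots> = bb k l n * (2 * a - (2 - a) * real V)" by (simp add: algebra_simps)
    also have "\<dots> \<le> bb k l n * (-1)"
      using V' bb0 by (intro mult_left_mono) auto
    also have "\<dots> < - (\<bar>M\<bar> * (real V + 1))" using bbc by (simp add: c_def)
    also have "\<dots> \<le> M * nrm2 x" unfolding nx
    proof -
      have "- \<bar>M\<bar> \<le> M" by linarith
      then have "- \<bar>M\<bar> * (real V + 1) \<le> M * (real V + 1)" by (intro mult_right_mono) auto
      then show "- (\<bar>M\<bar> * (real V + 1)) \<le> M * (real V + 1)" by simp
    qed
    finally show "\<exists>x\<in>D0. Re (ip x (opA k l \<xi> f x)) < M * nrm2 x" using xD by blast
  qed
  have second: "unbounded_below D B" if "self_adjoint_extension D B D0 (opA k l \<xi> f)" for D B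
  proof -
    have sub: "D0 \<subseteq> D" and eq: "\<forall>x\<in>D0. B x = opA k l \<xi> f x"
      using that unfolding self_adjoint_extension_def by auto
    show ?thesis unfolding unbounded_below_def
    proof
      fix M
      obtain x where x: "x \<in> D0" "Re (ip x (opA k l \<xi> f x)) < M * nrm2 x"
        using first unfolding unbounded_below_def by blast
      have "x \<in> D" "B x = opA k l \<xi> f x" using x(1) sub eq by auto
      then show "\<exists>x\<in>D. Re (ip x (B x)) < M * nrm2 x" using x(2) by (intro bexI[of _ x]) auto
    qed
  qed
  show ?thesis using first second unfolding \<xi>_def by blast
qed

end
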